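(* Let $\nu\in\mathcal M_0$. (1) Let $\mu,\tau\in\mathcal M_1$. Then, as formal power series in $z^{-1}$ (coefficientwise), \[ G_{\mu\boxplus(\tau+\varepsilon\nu)}(z)=G_{\mu\boxplus\tau}(z)+\varepsilon\,G_\nu(F_{\tau,\mu\boxplus\tau}(z))\,F'_{\tau,\mu\boxplus\tau}(z)+o(\varepsilon), \] where $F_{\tau,\mu\boxplus\tau}=K_\tau\circ G_{\mu\boxplus\tau}$. That is, the Gâteaux derivative $D_\tau C_\mu(\nu)$ exists in $\mathcal M_0$ and $G_{D_\tau C_\mu(\nu)}(z)=G_\nu(F_{\tau,\mu\boxplus\tau}(z))F'_{\tau,\mu\boxplus\tau}(z)$. (2) If $\{\mu_t\}$ is a free convolution semigroup, then $G_{\mu_t\boxplus(\mu_s+\varepsilon\nu)}(z)=G_{s+t}(z)+\varepsilon G_\nu(F_{s,s+t}(z))F'_{s,s+t}(z)+o(\varepsilon)$. (3) If $\{V_n(x,t)\}_{n\ge1}$ is a family of fluctuation polynomials for $\{\mu_t\}$ with dual family $\{V_n^\ast(t)\}$, then $G_{V_n^\ast(s)}(F_{s,t}(z))F'_{s,t}(z)=G_{V_n^\ast(t)}(z)$.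
   Context: $\mathcal M$ = linear functionals on $\mathbb C[x]$ with weak-$*$ topology (convergence of each moment), $\mathcal M_1$, $\mathcal M_0$ those with value $1$, resp. $0$, on the constant $1$. For $\nu\in\mathcal M$, $G_\nu(z)=\sum\langle\nu,x^n\rangle z^{-(n+1)}$; for $\nu\in\mathcal M_1$, $K_\nu$ is its compositional inverse and $R_\nu=K_\nu-\frac1z$; $\boxplus$ on $\mathcal M_1$ is defined by $R_{\mu\boxplus\nu}=R_\mu+R_\nu$. $C_\mu(\tau)=\mu\boxplus\tau$ and $D_\tau C_\mu(\nu)=\lim_{\varepsilon\to0}\frac1\varepsilon(C_\mu(\tau+\varepsilon\nu)-C_\mu(\tau))$ in the weak-$*$ topology. $\{\mu_t\}$ is the free convolution semigroup of a freely infinitely divisible probability measure $\mu$ with all moments finite ($R_{\mu_t}=tR_\mu$), $G_t=G_{\mu_t}$, $K_t=K_{\mu_t}$, $F_{s,t}=K_s\circ G_t$. Martingale polynomial: $p(x,t)$ polynomial in $x$ with $\mathcal K_{s,t}(p(\cdot,t))=p(\cdot,s)$ for $s<t$, $\mathcal K_{s,t}$ the linear operator on $\mathbb C[x]$ determined coefficientwise by $\mathcal K_{s,t}(\frac1{z-x})=\frac1{F_{s,t}(z)-x}$. Fluctuation polynomials: a family $\{V_n(x,t)\}_{n\ge1}$ such that $\partial_xV_n$ is a martingale polynomial of degree $n-1$; the dual family $V_n^\ast(t)\in\mathcal M_0$ is determined by $\langle V_n^\ast(t),1\rangle=0$, $\langle V_n^\ast(t),V_k(\cdot,t)\rangle=\delta_{nk}$.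 *)

theory Defs
  imports "HOL-Probability.Probability" "HOL-Computational_Algebra.Formal_Laurent_Series"
begin

(* A linear functional nu on C[x] is represented by its moment sequence
   nu n = <nu, x^n>.  M_1 : nu 0 = 1,  M_0 : nu 0 = 0.
   Convention: all series "in z^{-1}" are formal series in the variable
   X = fps_X = w = 1/z.  *)

type_synonym moments = "nat \<Rightarrow> complex"

(* G_nu(z) = sum_n <nu,x^n> z^{-(n+1)}, as a power series in w = 1/z *)
definition cauchy :: "moments \<Rightarrow> complex fps" where
  "cauchy \<nu> = Abs_fps (\<lambda>n. case n of 0 \<Rightarrow> 0 | Suc k \<Rightarrow> \<nu> k)"

(* 1 / K_tau(u) as a power series in u: since G_tau(K_tau(u)) = u and
   G_tau(z) = cauchy tau (1/z), the series 1/K_tau is the compositional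
   inverse of cauchy tau. *)
definition recipK :: "moments \<Rightarrow> complex fps" where
  "recipK \<tau> = fps_inv (cauchy \<tau>)"

definition Ktrans :: "moments \<Rightarrow> complex fls" where
  "Ktrans \<tau> = inverse (fps_to_fls (recipK \<tau>))"

definition Rtrans :: "moments \<Rightarrow> complex fls" where
  "Rtrans \<tau> = Ktrans \<tau> - fls_X_inv"

definition boxplus :: "moments \<Rightarrow> moments \<Rightarrow> moments" where
  "boxplus \<mu> \<nu> = (THE \<rho>. \<rho> 0 = 1 \<and> Rtrans \<rho> = Rtrans \<mu> + Rtrans \<nu>)"

(* 1 / F_{tau,rho}(z), F_{tau,rho} = K_tau o G_rho, as power series in w = 1/z *)
definition Finv :: "moments \<Rightarrow> moments \<Rightarrow> complex fps" where
  "Finv \<tau> \<rho> = recipK \<tau> oo cauchy \<rho>"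

definition Ftrans :: "moments \<Rightarrow> moments \<Rightarrow> complex fls" where
  "Ftrans \<tau> \<rho> = inverse (fps_to_fls (Finv \<tau> \<rho>))"

(* derivative d/dz of a Laurent series in w = 1/z:  d/dz = - w^2 d/dw *)
definition zderiv :: "complex fls \<Rightarrow> complex fls" where
  "zderiv L = - (fls_X ^ 2 * fls_deriv L)"

(* G_nu(F_{tau,rho}(z)) * F'_{tau,rho}(z), as Laurent series in w = 1/z.
   G_nu(F(z)) = sum_n nu_n F(z)^{-(n+1)} = cauchy nu oo (1/F). *)
definition GF :: "moments \<Rightarrow> moments \<Rightarrow> moments \<Rightarrow> complex fls" where
  "GF \<nu> \<tau> \<rho> = fps_to_fls (cauchy \<nu> oo Finv \<tau> \<rho>) * zderiv (Ftrans \<tau> \<rho>)"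

definition is_moment_seq :: "moments \<Rightarrow> bool" where
  "is_moment_seq m \<longleftrightarrow> (\<exists>M :: real measure. prob_space M \<and> sets M = sets borel \<and>
      (\<forall>n. integrable M (\<lambda>x. x ^ n)) \<and> (\<forall>n. m n = complex_of_real (\<integral>x. x ^ n \<partial>M)))"

definition free_semigroup :: "(real \<Rightarrow> moments) \<Rightarrow> bool" where
  "free_semigroup mu \<longleftrightarrow> (\<forall>t\<ge>0. is_moment_seq (mu t) \<and>
      Rtrans (mu t) = fls_const (complex_of_real t) * Rtrans (mu 1))"

(* linear operator on C[x] determined coefficientwise by
   K(1/(z-x)) = 1/(F(z)-x), where f = 1/F as series in w = 1/z:
   K(x^m) = sum_{n<=m} [w^{m+1}] f^{n+1} x^n *)
definition Kop :: "complex fps \<Rightarrow> complex poly \<Rightarrow> complex poly" where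
  "Kop f p = (\<Sum>m\<le>degree p. smult (coeff p m)
               (\<Sum>n\<le>m. monom ((f ^ (n+1)) $ (m+1)) n))"

definition Kst :: "(real \<Rightarrow> moments) \<Rightarrow> real \<Rightarrow> real \<Rightarrow> complex poly \<Rightarrow> complex poly" where
  "Kst mu s t = Kop (Finv (mu s) (mu t))"

definition martingale_poly :: "(real \<Rightarrow> moments) \<Rightarrow> (real \<Rightarrow> complex poly) \<Rightarrow> bool" where
  "martingale_poly mu p \<longleftrightarrow> (\<forall>s t. 0 \<le> s \<and> s < t \<longrightarrow> Kst mu s t (p t) = p s)"

definition fluctuation_polys :: "(real \<Rightarrow> moments) \<Rightarrow> (nat \<Rightarrow> real \<Rightarrow> complex poly) \<Rightarrow> bool" where
  "fluctuation_polys mu V \<longleftrightarrow> (\<forall>n\<ge>1. martingale_poly mu (\<lambda>t. pderiv (V n t)) \<and>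
      (\<forall>t\<ge>0. pderiv (V n t) \<noteq> 0 \<and> degree (pderiv (V n t)) = n - 1))"

definition pairing :: "moments \<Rightarrow> complex poly \<Rightarrow> complex" where
  "pairing \<phi> p = (\<Sum>i\<le>degree p. coeff p i * \<phi> i)"

definition dual_family :: "(nat \<Rightarrow> real \<Rightarrow> complex poly) \<Rightarrow> (nat \<Rightarrow> real \<Rightarrow> moments) \<Rightarrow> bool" where
  "dual_family V Vs \<longleftrightarrow> (\<forall>n\<ge>1. \<forall>t\<ge>0. Vs n t 0 = 0 \<and>
      (\<forall>k\<ge>1. pairing (Vs n t) (V k t) = (if n = k then 1 else 0)))"

end

theory Submission
  imports Defs
begin


definition hasD :: "(real \<Rightarrow> complex fps) \<Rightarrow> complex fps \<Rightarrow> bool" where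
  "hasD A A1 \<longleftrightarrow> (\<forall>n. ((\<lambda>e. A e $ n) has_vector_derivative A1 $ n) (at 0))"

lemma hasD_const: "hasD (\<lambda>e. C) 0"
  by (simp add: hasD_def)

lemma hasD_add: "hasD A A1 \<Longrightarrow> hasD B B1 \<Longrightarrow> hasD (\<lambda>e. A e + B e) (A1 + B1)"
  by (auto simp: hasD_def intro!: has_vector_derivative_add)

lemma hasD_diff: "hasD A A1 \<Longrightarrow> hasD B B1 \<Longrightarrow> hasD (\<lambda>e. A e - B e) (A1 - B1)"
  by (auto simp: hasD_def intro!: has_vector_derivative_diff)

lemma hasD_mult: "hasD A A1 \<Longrightarrow> hasD B B1 \<Longrightarrow> hasD (\<lambda>e. A e * B e) (A 0 * B1 + A1 * B 0)"
  unfolding hasD_def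
proof (intro allI)
  fix n
  assume A: "\<forall>n. ((\<lambda>e. A e $ n) has_vector_derivative A1 $ n) (at 0)"
     and B: "\<forall>n. ((\<lambda>e. B e $ n) has_vector_derivative B1 $ n) (at 0)"
  have "((\<lambda>e. \<Sum>i=0..n. A e $ i * B e $ (n - i)) has_vector_derivative
     (\<Sum>i=0..n. A 0 $ i * B1 $ (n - i) + A1 $ i * B 0 $ (n - i))) (at 0)"
    by (intro has_vector_derivative_sum has_vector_derivative_mult) (use A B in auto)
  then show "((\<lambda>e. (A e * B e) $ n) has_vector_derivative (A 0 * B1 + A1 * B 0) $ n) (at 0)"
    by (simp add: fps_mult_nth sum.distrib)
qed

lemma hasD_shift: "hasD A A1 \<Longrightarrow> hasD (\<lambda>e. fps_shift k (A e)) (fps_shift k A1)"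
  by (simp add: hasD_def)

lemma hasD_power: "hasD A A1 \<Longrightarrow> hasD (\<lambda>e. A e ^ i) (of_nat i * A 0 ^ (i - 1) * A1)"
proof (induction i)
  case 0
  then show ?case by (simp add: hasD_const)
next
  case (Suc i)
  have "hasD (\<lambda>e. A e * A e ^ i) (A 0 * (of_nat i * A 0 ^ (i - 1) * A1) + A1 * A 0 ^ i)"
    by (rule hasD_mult[OF Suc.prems Suc.IH[OF Suc.prems]])
  moreover have "A 0 * (of_nat i * A 0 ^ (i - 1) * A1) + A1 * A 0 ^ i = of_nat (Suc i) * A 0 ^ (Suc i - 1) * A1"
    by (cases i) (simp_all add: algebra_simps)
  ultimately show ?case by simp
qed

lemma hasD_lin: "hasD (\<lambda>e. C + fps_const (complex_of_real e) * N) N"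
  unfolding hasD_def
proof
  fix n
  have "((\<lambda>e. complex_of_real e * N $ n) has_vector_derivative (1 * N $ n)) (at 0)"
    using has_vector_derivative_mult_left[OF has_vector_derivative_of_real[OF DERIV_ident], of "N $ n" "at 0"]
    by simp
  then have "((\<lambda>e. C $ n + complex_of_real e * N $ n) has_vector_derivative (0 + 1 * N $ n)) (at 0)"
    by (intro has_vector_derivative_add has_vector_derivative_const)
  then show "((\<lambda>e. (C + fps_const (complex_of_real e) * N) $ n) has_vector_derivative N $ n) (at 0)"
    by simp
qed

lemma hasD_unique: "hasD A A1 \<Longrightarrow> hasD A A2 \<Longrightarrow> A1 = A2"
  unfolding hasD_def fps_eq_iff using vector_derivative_unique_at by blast

lemma hasD_const_coeff:
  fixes A :: "real \<Rightarrow> complex fps" and A1 :: "complex fps"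
  assumes "hasD A A1" "\<And>e. A e $ n = c"
  shows "A1 $ n = 0"
proof -
  have "((\<lambda>e. A e $ n) has_vector_derivative A1 $ n) (at 0)" using assms(1) unfolding hasD_def by blast
  moreover have "((\<lambda>e. A e $ n) has_vector_derivative 0) (at 0)" using assms(2) by simp
  ultimately show ?thesis by (rule vector_derivative_unique_at)
qed

lemma hasD_cong: "hasD A A1 \<Longrightarrow> (\<And>e. A e = B e) \<Longrightarrow> A1 = B1 \<Longrightarrow> hasD B B1"
  by (simp add: hasD_def)

lemma compose_trunc:
  fixes A B :: "'a::comm_ring_1 fps"
  assumes "B $ 0 = 0" "n \<le> N"
  shows "(A oo B) $ n = (\<Sum>i=0..N. A $ i * (B ^ i) $ n)"
  unfolding fps_compose_nth
  by (rule sum.mono_neutral_left) (use assms startsby_zero_power_prefix[OF assms(1)] in auto)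

lemma mult_nth_cong:
  fixes F G H :: "'a::comm_ring_1 fps"
  assumes "\<And>k. k \<le> n \<Longrightarrow> F $ k = G $ k"
  shows "(F * H) $ n = (G * H) $ n"
  unfolding fps_mult_nth by (rule sum.cong) (auto simp: assms)

lemma hasD_compose:
  fixes A B :: "real \<Rightarrow> complex fps"
  assumes A: "hasD A A1" and B: "hasD B B1" and B0: "\<And>e. B e $ 0 = 0"
  shows "hasD (\<lambda>e. A e oo B e) ((A1 oo B 0) + (fps_deriv (A 0) oo B 0) * B1)"
  unfolding hasD_def
proof
  fix n
  have eq: "(\<lambda>e. (A e oo B e) $ n) = (\<lambda>e. \<Sum>i=0..Suc n. A e $ i * (B e ^ i) $ n)"
    using compose_trunc[OF B0, of n "Suc n"] by auto
  have "((\<lambda>e. \<Sum>i=0..Suc n. A e $ i * (B e ^ i) $ n) has_vector_derivative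
      (\<Sum>i=0..Suc n. A 0 $ i * (of_nat i * B 0 ^ (i - 1) * B1) $ n + A1 $ i * (B 0 ^ i) $ n)) (at 0)"
  proof (rule has_vector_derivative_sum)
    fix i
    show "((\<lambda>e. A e $ i * (B e ^ i) $ n) has_vector_derivative
      (A 0 $ i * (of_nat i * B 0 ^ (i - 1) * B1) $ n + A1 $ i * (B 0 ^ i) $ n)) (at 0)"
    proof -
      have P: "((\<lambda>e. (B e ^ i) $ n) has_vector_derivative (of_nat i * B 0 ^ (i - 1) * B1) $ n) (at 0)"
        using hasD_power[OF B] unfolding hasD_def by blast
      have a: "((\<lambda>e. A e $ i) has_vector_derivative A1 $ i) (at 0)"
        using A unfolding hasD_def by blast
      show ?thesis using has_vector_derivative_mult[OF a P] .
    qed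
  qed
  moreover have "(\<Sum>i=0..Suc n. A 0 $ i * (of_nat i * B 0 ^ (i - 1) * B1) $ n + A1 $ i * (B 0 ^ i) $ n)
      = ((A1 oo B 0) + (fps_deriv (A 0) oo B 0) * B1) $ n"
  proof -
    have s2: "(\<Sum>i=0..Suc n. A1 $ i * (B 0 ^ i) $ n) = (A1 oo B 0) $ n"
      using compose_trunc[OF B0, of n "Suc n"] by simp
    let ?P = "\<Sum>j=0..n. fps_const (fps_deriv (A 0) $ j) * B 0 ^ j"
    have "((fps_deriv (A 0) oo B 0) * B1) $ n = (?P * B1) $ n"
    proof (rule mult_nth_cong)
      fix k assume "k \<le> n"
      then show "(fps_deriv (A 0) oo B 0) $ k = ?P $ k"
        using compose_trunc[OF B0, of k n] by (simp add: fps_sum_nth)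
    qed
    also have "(?P * B1) $ n = (\<Sum>j=0..n. fps_deriv (A 0) $ j * (B 0 ^ j * B1) $ n)"
      by (simp add: sum_distrib_right fps_sum_nth mult.assoc)
    also have "\<dots> = (\<Sum>j=0..n. A 0 $ Suc j * (of_nat (Suc j) * B 0 ^ j * B1) $ n)"
      by (rule sum.cong) (simp_all add: fps_deriv_nth mult.assoc fps_of_nat[symmetric] del: of_nat_Suc)
    also have "\<dots> = (\<Sum>i=0..Suc n. A 0 $ i * (of_nat i * B 0 ^ (i - 1) * B1) $ n)"
      by (subst sum.atLeast0_atMost_Suc_shift) simp
    finally have s1: "((fps_deriv (A 0) oo B 0) * B1) $ n = (\<Sum>i=0..Suc n. A 0 $ i * (of_nat i * B 0 ^ (i - 1) * B1) $ n)" .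
    have "(\<Sum>i=0..Suc n. A 0 $ i * (of_nat i * B 0 ^ (i - 1) * B1) $ n + A1 $ i * (B 0 ^ i) $ n)
       = (\<Sum>i=0..Suc n. A 0 $ i * (of_nat i * B 0 ^ (i - 1) * B1) $ n) + (\<Sum>i=0..Suc n. A1 $ i * (B 0 ^ i) $ n)"
      by (rule sum.distrib)
    also have "\<dots> = ((fps_deriv (A 0) oo B 0) * B1) $ n + (A1 oo B 0) $ n"
      by (simp only: s1 s2)
    also have "\<dots> = ((A1 oo B 0) + (fps_deriv (A 0) oo B 0) * B1) $ n"
      by (simp add: add.commute)
    finally show ?thesis .
  qed
  ultimately show "((\<lambda>e. (A e oo B e) $ n) has_vector_derivative ((A1 oo B 0) + (fps_deriv (A 0) oo B 0) * B1) $ n) (at 0)"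
    by (simp add: eq)
qed

lemma hvd_quot:
  fixes g :: "real \<Rightarrow> complex"
  assumes "(g has_vector_derivative g') (at 0)"
  shows "((\<lambda>e. (g e - g 0) / complex_of_real e) \<longlongrightarrow> g') (at 0)"
proof -
  have "((\<lambda>y. norm ((g y - g 0) - (y - 0) *\<^sub>R g') / norm (y - 0)) \<longlongrightarrow> 0) (at 0)"
    using assms unfolding has_vector_derivative_def has_derivative_iff_norm by blast
  then have L: "((\<lambda>y. norm ((g y - g 0) - y *\<^sub>R g') / norm y) \<longlongrightarrow> 0) (at 0)" by simp
  have ev: "eventually (\<lambda>y. norm ((g y - g 0) - y *\<^sub>R g') / norm y = norm ((g y - g 0) / complex_of_real y - g')) (at (0::real))"
    unfolding eventually_at_filter
  proof (intro always_eventually allI impI)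
    fix y :: real assume y: "y \<noteq> 0"
    have "(g y - g 0) / complex_of_real y - g' = ((g y - g 0) - complex_of_real y * g') / complex_of_real y"
      using y by (simp add: diff_divide_distrib)
    then show "norm ((g y - g 0) - y *\<^sub>R g') / norm y = norm ((g y - g 0) / complex_of_real y - g')"
      by (simp add: norm_divide scaleR_conv_of_real)
  qed
  have "((\<lambda>y. norm ((g y - g 0) / complex_of_real y - g')) \<longlongrightarrow> 0) (at 0)"
    by (rule tendsto_cong[OF ev, THEN iffD1, OF L])
  then have "((\<lambda>y. (g y - g 0) / complex_of_real y - g') \<longlongrightarrow> 0) (at 0)"
    by (rule tendsto_norm_zero_cancel)
  then show ?thesis
    by (rule LIM_zero_cancel)
qed

lemma alg1:
  fixes i a b c :: "'a::comm_ring_1"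
  assumes "i * a = 1"
  shows "i * (a * b + c * i) - c * i ^ 2 = b"
proof -
  have "i * (a * b + c * i) - c * i ^ 2 = (i * a) * b"
    by (simp add: algebra_simps power2_eq_square)
  then show ?thesis using assms by simp
qed

lemma alg2:
  fixes p q x b :: "'a::comm_ring_1"
  assumes "p * q = 1"
  shows "q * (x + p * b) - x * q = b"
proof -
  have "q * (x + p * b) - x * q = (p * q) * b"
    by (simp add: algebra_simps)
  then show ?thesis using assms by simp
qed

lemma hasD_inverse:
  fixes A :: "real \<Rightarrow> complex fps"
  assumes A: "hasD A A1" and A0: "\<And>e. A e $ 0 = 1"
  shows "hasD (\<lambda>e. inverse (A e)) (- (A1 * inverse (A 0) ^ 2))"
proof -
  have rec: "inverse (A e) $ Suc n = - (\<Sum>i=0..n. A e $ Suc i * inverse (A e) $ (n - i))" for e n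
  proof -
    define S where "S = (\<Sum>i=0..n. A e $ Suc i * inverse (A e) $ (n - i))"
    have "(A e * inverse (A e)) $ Suc n = A e $ 0 * inverse (A e) $ Suc n + S"
      unfolding fps_mult_nth S_def sum.atLeast0_atMost_Suc_shift by simp
    then have "inverse (A e) $ Suc n + S = 0"
      using inverse_mult_eq_1'[of "A e"] A0[of e] by simp
    then show ?thesis unfolding S_def[symmetric] by (simp add: eq_neg_iff_add_eq_0)
  qed
  have Ad: "((\<lambda>e. A e $ n) has_vector_derivative A1 $ n) (at 0)" for n
    using A unfolding hasD_def by blast
  have ex: "\<exists>d. ((\<lambda>e. inverse (A e) $ n) has_vector_derivative d) (at 0)" for n
  proof (induction n rule: less_induct)
    case (less n)
    show ?case
    proof (cases n)
      case 0
      have eq: "(\<lambda>e. inverse (A e) $ n) = (\<lambda>e. 1)" using A0 0 by simp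
      show ?thesis by (rule exI[of _ 0]) (simp only: eq has_vector_derivative_const)
    next
      case (Suc m)
      have exi: "\<forall>i\<in>{0..m}. \<exists>d. ((\<lambda>e. inverse (A e) $ (m - i)) has_vector_derivative d) (at 0)"
      proof
        fix i assume "i \<in> {0..m}"
        have "m - i < n" using Suc by simp
        then show "\<exists>d. ((\<lambda>e. inverse (A e) $ (m - i)) has_vector_derivative d) (at 0)"
          by (rule less.IH)
      qed
      obtain D where D: "\<And>i. i \<in> {0..m} \<Longrightarrow> ((\<lambda>e. inverse (A e) $ (m - i)) has_vector_derivative D i) (at 0)"
        using bchoice[OF exi] by blast
      have "((\<lambda>e. - (\<Sum>i=0..m. A e $ Suc i * inverse (A e) $ (m - i))) has_vector_derivative
          - (\<Sum>i=0..m. A 0 $ Suc i * D i + A1 $ Suc i * inverse (A 0) $ (m - i))) (at 0)"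
      proof (rule has_vector_derivative_minus, rule has_vector_derivative_sum)
        fix i assume i: "i \<in> {0..m}"
        show "((\<lambda>e. A e $ Suc i * inverse (A e) $ (m - i)) has_vector_derivative
            A 0 $ Suc i * D i + A1 $ Suc i * inverse (A 0) $ (m - i)) (at 0)"
          by (rule has_vector_derivative_mult[OF Ad D[OF i]])
      qed
      then show ?thesis unfolding Suc rec by blast
    qed
  qed
  have exall: "\<forall>n. \<exists>d. ((\<lambda>e. inverse (A e) $ n) has_vector_derivative d) (at 0)"
    using ex by blast
  obtain B1 where B1: "\<And>n. ((\<lambda>e. inverse (A e) $ n) has_vector_derivative B1 n) (at 0)"
    using choice[OF exall] by blast
  have hB: "hasD (\<lambda>e. inverse (A e)) (Abs_fps B1)"
    unfolding hasD_def using B1 by simp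
  have "hasD (\<lambda>e. A e * inverse (A e)) (A 0 * Abs_fps B1 + A1 * inverse (A 0))"
    by (rule hasD_mult[OF A hB])
  moreover have "hasD (\<lambda>e. A e * inverse (A e)) 0"
    by (rule hasD_cong[OF hasD_const[of 1]]) (simp_all add: inverse_mult_eq_1' A0)
  ultimately have eq: "A 0 * Abs_fps B1 + A1 * inverse (A 0) = 0"
    by (rule hasD_unique)
  have I: "inverse (A 0) * A 0 = 1" by (rule inverse_mult_eq_1) (simp add: A0)
  have "Abs_fps B1 = inverse (A 0) * (A 0 * Abs_fps B1 + A1 * inverse (A 0)) - A1 * inverse (A 0) ^ 2"
    by (rule alg1[OF I, symmetric])
  also have "\<dots> = - (A1 * inverse (A 0) ^ 2)" using eq by simp
  finally show ?thesis using hB by simp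
qed

lemma fps_inv_nth0 [simp]: "fps_inv a $ 0 = 0"
  by (simp add: fps_inv_def)

lemma fps_inv_nth1: "a $ 1 = (1::complex) \<Longrightarrow> fps_inv a $ 1 = 1"
  by (simp add: fps_inv_def)

lemma hasD_fps_inv:
  fixes A :: "real \<Rightarrow> complex fps"
  assumes A: "hasD A A1" and A0: "\<And>e. A e $ 0 = 0" and A1: "\<And>e. A e $ 1 = 1"
  shows "hasD (\<lambda>e. fps_inv (A e)) (- (A1 oo fps_inv (A 0)) * fps_deriv (fps_inv (A 0)))"
proof -
  have rec: "fps_inv (A e) $ Suc n = fps_X $ Suc n - (\<Sum>i=0..n. fps_inv (A e) $ i * (A e ^ i) $ Suc n)" for e n
    using A1[of e] by (simp add: fps_inv_def)
  have ex: "\<exists>d. ((\<lambda>e. fps_inv (A e) $ n) has_vector_derivative d) (at 0)" for n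
  proof (induction n rule: less_induct)
    case (less n)
    show ?case
    proof (cases n)
      case 0
      have eq: "(\<lambda>e. fps_inv (A e) $ n) = (\<lambda>e. 0)" using 0 by simp
      show ?thesis by (rule exI[of _ 0]) (simp only: eq has_vector_derivative_const)
    next
      case (Suc m)
      have exi: "\<forall>i\<in>{0..m}. \<exists>d. ((\<lambda>e. fps_inv (A e) $ i) has_vector_derivative d) (at 0)"
      proof
        fix i assume "i \<in> {0..m}"
        then have "i < n" using Suc by simp
        then show "\<exists>d. ((\<lambda>e. fps_inv (A e) $ i) has_vector_derivative d) (at 0)"
          by (rule less.IH)
      qed
      obtain D where D: "\<And>i. i \<in> {0..m} \<Longrightarrow> ((\<lambda>e. fps_inv (A e) $ i) has_vector_derivative D i) (at 0)"
        using bchoice[OF exi] by blast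
      have P: "((\<lambda>e. (A e ^ i) $ Suc m) has_vector_derivative (of_nat i * A 0 ^ (i - 1) * A1) $ Suc m) (at 0)" for i
        using hasD_power[OF A] unfolding hasD_def by blast
      have "((\<lambda>e. fps_X $ Suc m - (\<Sum>i=0..m. fps_inv (A e) $ i * (A e ^ i) $ Suc m)) has_vector_derivative
          0 - (\<Sum>i=0..m. fps_inv (A 0) $ i * (of_nat i * A 0 ^ (i - 1) * A1) $ Suc m + D i * (A 0 ^ i) $ Suc m)) (at 0)"
      proof (rule has_vector_derivative_diff[OF has_vector_derivative_const], rule has_vector_derivative_sum)
        fix i assume i: "i \<in> {0..m}"
        show "((\<lambda>e. fps_inv (A e) $ i * (A e ^ i) $ Suc m) has_vector_derivative
            fps_inv (A 0) $ i * (of_nat i * A 0 ^ (i - 1) * A1) $ Suc m + D i * (A 0 ^ i) $ Suc m) (at 0)"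
          by (rule has_vector_derivative_mult[OF D[OF i] P])
      qed
      then show ?thesis unfolding Suc rec by blast
    qed
  qed
  have exall: "\<forall>n. \<exists>d. ((\<lambda>e. fps_inv (A e) $ n) has_vector_derivative d) (at 0)"
    using ex by blast
  obtain B1 where B1: "\<And>n. ((\<lambda>e. fps_inv (A e) $ n) has_vector_derivative B1 n) (at 0)"
    using choice[OF exall] by blast
  have hB: "hasD (\<lambda>e. fps_inv (A e)) (Abs_fps B1)"
    unfolding hasD_def using B1 by simp
  let ?B0 = "fps_inv (A 0)"
  have "hasD (\<lambda>e. A e oo fps_inv (A e)) ((A1 oo ?B0) + (fps_deriv (A 0) oo ?B0) * Abs_fps B1)"
    by (rule hasD_compose[OF A hB]) simp
  moreover have "hasD (\<lambda>e. A e oo fps_inv (A e)) 0"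
  proof (rule hasD_cong[OF hasD_const[of fps_X]])
    fix e show "fps_X = A e oo fps_inv (A e)"
      by (rule sym, rule fps_inv_right) (simp_all add: A0 A1[unfolded One_nat_def])
  qed simp
  ultimately have eq: "(A1 oo ?B0) + (fps_deriv (A 0) oo ?B0) * Abs_fps B1 = 0"
    by (rule hasD_unique)
  have "fps_deriv (A 0 oo ?B0) = (fps_deriv (A 0) oo ?B0) * fps_deriv ?B0"
    by (rule fps_compose_deriv) simp
  then have I: "(fps_deriv (A 0) oo ?B0) * fps_deriv ?B0 = 1"
    using fps_inv_right[of "A 0"] A0 A1 by simp
  have "Abs_fps B1 = fps_deriv ?B0 * ((A1 oo ?B0) + (fps_deriv (A 0) oo ?B0) * Abs_fps B1) - (A1 oo ?B0) * fps_deriv ?B0"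
    by (rule alg2[OF I, symmetric])
  also have "\<dots> = - (A1 oo ?B0) * fps_deriv ?B0" using eq by simp
  finally show ?thesis using hB by simp
qed



lemma cauchy_nth0 [simp]: "cauchy \<nu> $ 0 = 0"
  by (simp add: cauchy_def)

lemma cauchy_nth_Suc [simp]: "cauchy \<nu> $ Suc k = \<nu> k"
  by (simp add: cauchy_def)

lemma cauchy_nth1 [simp]: "cauchy \<nu> $ 1 = \<nu> 0"
  by (simp add: cauchy_def)

lemma cauchy_eq: "f $ 0 = 0 \<Longrightarrow> cauchy (\<lambda>n. f $ Suc n) = f"
  by (rule fps_ext) (auto simp: cauchy_def split: nat.split)

lemma recipK_nth0 [simp]: "recipK \<tau> $ 0 = 0"
  by (simp add: recipK_def)

lemma recipK_nth1: "\<tau> 0 = 1 \<Longrightarrow> recipK \<tau> $ 1 = 1"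
  unfolding recipK_def by (rule fps_inv_nth1) simp

definition uu :: "moments \<Rightarrow> complex fps" where
  "uu \<tau> = fps_shift 1 (recipK \<tau>)"

definition RR :: "moments \<Rightarrow> moments \<Rightarrow> complex fps" where
  "RR \<mu> \<tau> = fps_X * (uu \<mu> * uu \<tau> * inverse (uu \<mu> + uu \<tau> - uu \<mu> * uu \<tau>))"

definition bp :: "moments \<Rightarrow> moments \<Rightarrow> moments" where
  "bp \<mu> \<tau> = (\<lambda>n. fps_inv (RR \<mu> \<tau>) $ Suc n)"

lemma X_shift: "(f :: complex fps) $ 0 = 0 \<Longrightarrow> fps_X * fps_shift 1 f = f"
  by (rule fps_ext) (auto simp: fps_X_mult_nth)

lemma recipK_X: "recipK \<tau> = fps_X * uu \<tau>"
  unfolding uu_def by (rule X_shift[symmetric]) simp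

lemma uu_nth0: "\<tau> 0 = 1 \<Longrightarrow> uu \<tau> $ 0 = 1"
  unfolding uu_def using recipK_nth1[of \<tau>] by simp

lemma den_nth0: "\<mu> 0 = 1 \<Longrightarrow> \<tau> 0 = 1 \<Longrightarrow> (uu \<mu> + uu \<tau> - uu \<mu> * uu \<tau>) $ 0 = 1"
  by (simp add: uu_nth0)

lemma RR_nth0 [simp]: "RR \<mu> \<tau> $ 0 = 0"
  by (simp add: RR_def)

lemma RR_nth1: "\<mu> 0 = 1 \<Longrightarrow> \<tau> 0 = 1 \<Longrightarrow> RR \<mu> \<tau> $ 1 = 1"
  by (simp add: RR_def uu_nth0 den_nth0)

lemma cauchy_bp: "cauchy (bp \<mu> \<tau>) = fps_inv (RR \<mu> \<tau>)"
  unfolding bp_def by (rule cauchy_eq) simp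

lemma bp_0: "\<mu> 0 = 1 \<Longrightarrow> \<tau> 0 = 1 \<Longrightarrow> bp \<mu> \<tau> 0 = 1"
  unfolding bp_def using fps_inv_nth1[OF RR_nth1[of \<mu> \<tau>]] by simp

lemma recipK_bp: "\<mu> 0 = 1 \<Longrightarrow> \<tau> 0 = 1 \<Longrightarrow> recipK (bp \<mu> \<tau>) = RR \<mu> \<tau>"
  unfolding recipK_def cauchy_bp
  by (rule fps_inv_idempotent) (simp_all add: RR_nth1[unfolded One_nat_def])

lemma fls_nonzero: "(f :: complex fps) $ 0 \<noteq> 0 \<Longrightarrow> fps_to_fls f \<noteq> 0"
  by auto

lemma field_alg:
  fixes x u v :: "'a::field"
  assumes "x \<noteq> 0" "u \<noteq> 0" "v \<noteq> 0" "u + v - u * v \<noteq> 0"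
  shows "inverse (x * (u * v * inverse (u + v - u * v))) - inverse x
      = inverse (x * u) - inverse x + (inverse (x * v) - inverse x)"
  using assms by (simp add: field_simps)

lemma Rtrans_bp:
  assumes "\<mu> 0 = 1" "\<tau> 0 = 1"
  shows "Rtrans (bp \<mu> \<tau>) = Rtrans \<mu> + Rtrans \<tau>"
proof -
  define U where "U = fps_to_fls (uu \<mu>)"
  define V where "V = fps_to_fls (uu \<tau>)"
  define Dn where "Dn = uu \<mu> + uu \<tau> - uu \<mu> * uu \<tau>"
  have D0: "Dn $ 0 = 1" using den_nth0[of \<mu> \<tau>, OF assms] by (simp add: Dn_def)
  have U0: "U \<noteq> 0" unfolding U_def using uu_nth0[of \<mu>, OF assms(1)] by (intro fls_nonzero) simp
  have V0: "V \<noteq> 0" unfolding V_def using uu_nth0[of \<tau>, OF assms(2)] by (intro fls_nonzero) simp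
  have DD: "fps_to_fls Dn = U + V - U * V"
    by (simp add: Dn_def U_def V_def fls_times_fps_to_fls)
  have DD0: "U + V - U * V \<noteq> 0" using D0 DD fls_nonzero[of Dn] by simp
  have R: "fps_to_fls (RR \<mu> \<tau>) = fls_X * (U * V * inverse (U + V - U * V))"
    unfolding RR_def fls_times_fps_to_fls Dn_def[symmetric]
    by (simp add: fls_inverse_fps_to_fls[symmetric] D0 DD U_def V_def)
  have K1: "Ktrans (bp \<mu> \<tau>) = inverse (fls_X * (U * V * inverse (U + V - U * V)))"
    unfolding Ktrans_def recipK_bp[of \<mu> \<tau>, OF assms] R ..
  have K2: "Ktrans \<mu> = inverse (fls_X * U)"
    unfolding Ktrans_def recipK_X U_def by (simp add: fls_times_fps_to_fls)
  have K3: "Ktrans \<tau> = inverse (fls_X * V)"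
    unfolding Ktrans_def recipK_X V_def by (simp add: fls_times_fps_to_fls)
  have X0: "(fls_X :: complex fls) \<noteq> 0" by simp
  have "inverse (fls_X * (U * V * inverse (U + V - U * V))) - fls_X_inv
      = inverse (fls_X * U) - fls_X_inv + (inverse (fls_X * V) - fls_X_inv)"
    using field_alg[OF X0 U0 V0 DD0] unfolding fls_inverse_X .
  then show ?thesis unfolding Rtrans_def K1 K2 K3 .
qed

lemma Rtrans_inj:
  assumes "\<rho> 0 = 1" "\<sigma> 0 = 1" "Rtrans \<rho> = Rtrans \<sigma>"
  shows "\<rho> = \<sigma>"
proof -
  have "Ktrans \<rho> = Ktrans \<sigma>" using assms(3) by (simp add: Rtrans_def)
  then have "fps_to_fls (recipK \<rho>) = fps_to_fls (recipK \<sigma>)"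
    unfolding Ktrans_def by simp
  then have "fps_inv (fps_inv (cauchy \<rho>)) = fps_inv (fps_inv (cauchy \<sigma>))"
    unfolding recipK_def by simp
  then have c: "cauchy \<rho> = cauchy \<sigma>"
    using assms(1,2) by (simp add: fps_inv_idempotent)
  show ?thesis
  proof
    fix n show "\<rho> n = \<sigma> n" using arg_cong[OF c, of "\<lambda>f. f $ Suc n"] by simp
  qed
qed

lemma boxplus_eq:
  assumes "\<rho> 0 = 1" "Rtrans \<rho> = Rtrans \<mu> + Rtrans \<tau>"
  shows "boxplus \<mu> \<tau> = \<rho>"
  unfolding boxplus_def
  by (rule the_equality) (use assms Rtrans_inj in auto)

lemma boxplus_bp: "\<mu> 0 = 1 \<Longrightarrow> \<tau> 0 = 1 \<Longrightarrow> boxplus \<mu> \<tau> = bp \<mu> \<tau>"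
  by (rule boxplus_eq) (simp_all add: bp_0 Rtrans_bp)



lemma GF_alt:
  "GF \<nu> \<tau> \<rho> = fps_to_fls (cauchy \<nu> oo Finv \<tau> \<rho>) *
     (fls_X ^ 2 * fps_to_fls (fps_deriv (Finv \<tau> \<rho>)) / (fps_to_fls (Finv \<tau> \<rho>)) ^ 2)"
  unfolding GF_def zderiv_def Ftrans_def fls_inverse_deriv' fls_deriv_fps_to_fls
  by simp

lemma part1:
  fixes \<mu> \<tau> \<nu> :: moments
  assumes \<mu>0: "\<mu> 0 = 1" and \<tau>0: "\<tau> 0 = 1" and \<nu>0: "\<nu> 0 = 0"
  shows "\<exists>D. D 0 = 0 \<and>
         (\<forall>n. ((\<lambda>\<epsilon>::real. (boxplus \<mu> (\<lambda>k. \<tau> k + complex_of_real \<epsilon> * \<nu> k) n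
                               - boxplus \<mu> \<tau> n) / complex_of_real \<epsilon>) \<longlongrightarrow> D n) (at 0)) \<and>
         fps_to_fls (cauchy D) = GF \<nu> \<tau> (boxplus \<mu> \<tau>)"
proof -
  define \<tau>e where "\<tau>e = (\<lambda>(e::real) k. \<tau> k + complex_of_real e * \<nu> k)"
  have \<tau>e0: "\<tau>e 0 = \<tau>" by (simp add: \<tau>e_def)
  have \<tau>e_0: "\<tau>e e 0 = 1" for e using \<tau>0 \<nu>0 by (simp add: \<tau>e_def)
  have cA: "cauchy (\<tau>e e) = cauchy \<tau> + fps_const (complex_of_real e) * cauchy \<nu>" for e
    by (rule fps_ext) (simp add: \<tau>e_def cauchy_def split: nat.split)
  define A where "A = (\<lambda>e. cauchy (\<tau>e e))"
  have hA: "hasD A (cauchy \<nu>)"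
    by (rule hasD_cong[OF hasD_lin[of "cauchy \<tau>" "cauchy \<nu>"]]) (simp_all add: A_def cA)
  have A0: "A e $ 0 = 0" for e by (simp add: A_def)
  have A1: "A e $ 1 = 1" for e by (simp add: A_def \<tau>e_0)
  have Az: "A 0 = cauchy \<tau>" by (simp add: A_def \<tau>e0)
  define r where "r = (\<lambda>e. fps_inv (A e))"
  define r0 where "r0 = recipK \<tau>"
  have rz: "r 0 = r0" by (simp add: r_def r0_def Az recipK_def)
  define r1 where "r1 = - (cauchy \<nu> oo r0) * fps_deriv r0"
  have hr: "hasD r r1"
    using hasD_fps_inv[OF hA A0 A1] unfolding r_def r1_def r0_def Az recipK_def .
  have r1_0: "r1 $ 0 = 0" by (simp add: r1_def \<nu>0)
  have re1: "r e $ 1 = 1" for e unfolding r_def by (rule fps_inv_nth1[OF A1])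
  define u where "u = (\<lambda>e. fps_shift 1 (r e))"
  define u1 where "u1 = fps_shift 1 r1"
  have hu: "hasD u u1" unfolding u_def u1_def by (rule hasD_shift[OF hr])
  have u_uu: "u e = uu (\<tau>e e)" for e by (simp add: u_def r_def uu_def recipK_def A_def)
  have ue0: "u e $ 0 = 1" for e using re1[of e] by (simp add: u_def)
  define v where "v = uu \<mu>"
  have v0: "v $ 0 = 1" using uu_nth0[of \<mu>, OF \<mu>0] by (simp add: v_def)
  define den where "den = (\<lambda>e. v + u e - v * u e)"
  define den1 where "den1 = u1 - v * u1"
  have hvu: "hasD (\<lambda>e. v * u e) (v * u1)"
    by (rule hasD_cong[OF hasD_mult[OF hasD_const[of v] hu]]) simp_all
  have hden: "hasD den den1"
    unfolding den_def den1_def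
    by (rule hasD_cong[OF hasD_diff[OF hasD_add[OF hasD_const[of v] hu] hvu]]) simp_all
  have den0: "den e $ 0 = 1" for e by (simp add: den_def v0 ue0)
  define W where "W = (\<lambda>e. inverse (den e))"
  define W1 where "W1 = - (den1 * inverse (den 0) ^ 2)"
  have hW: "hasD W W1" unfolding W_def W1_def by (rule hasD_inverse[OF hden den0])
  define RRe where "RRe = (\<lambda>e. fps_X * (v * u e * W e))"
  have RRe_eq: "RRe e = RR \<mu> (\<tau>e e)" for e
    by (simp add: RRe_def RR_def W_def den_def v_def u_uu)
  define R1 where "R1 = fps_X * ((v * u 0) * W1 + (v * u1) * W 0)"
  have hR: "hasD RRe R1"
  proof -
    have "hasD (\<lambda>e. (v * u e) * W e) ((v * u 0) * W1 + (v * u1) * W 0)"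
      by (rule hasD_mult[OF hvu hW])
    then have "hasD (\<lambda>e. fps_X * ((v * u e) * W e)) (fps_X * ((v * u 0) * W1 + (v * u1) * W 0) + 0 * ((v * u 0) * W 0))"
      by (rule hasD_mult[OF hasD_const[of fps_X]])
    then show ?thesis unfolding RRe_def R1_def by (simp add: mult.assoc)
  qed
  have RRe0: "RRe e $ 0 = 0" for e by (simp add: RRe_eq)
  have RRe1: "RRe e $ 1 = 1" for e using RR_nth1[of \<mu> "\<tau>e e", OF \<mu>0 \<tau>e_0] by (simp add: RRe_eq)
  define c where "c = (\<lambda>e. fps_inv (RRe e))"
  define C where "C = c 0"
  define d where "d = - (R1 oo C) * fps_deriv C"
  have hc: "hasD c d"
    using hasD_fps_inv[OF hR RRe0 RRe1] unfolding c_def d_def C_def .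
  have bpe: "boxplus \<mu> (\<tau>e e) = (\<lambda>n. c e $ Suc n)" for e
    by (simp add: boxplus_bp[of \<mu> "\<tau>e e", OF \<mu>0 \<tau>e_0] bp_def c_def RRe_eq)
  have bp0: "boxplus \<mu> \<tau> = (\<lambda>n. C $ Suc n)"
    using bpe[of 0] by (simp add: \<tau>e0 C_def)
  define D where "D = (\<lambda>n. d $ Suc n)"
  have lim: "((\<lambda>\<epsilon>::real. (boxplus \<mu> (\<lambda>k. \<tau> k + complex_of_real \<epsilon> * \<nu> k) n
                               - boxplus \<mu> \<tau> n) / complex_of_real \<epsilon>) \<longlongrightarrow> D n) (at 0)" for n
  proof -
    have "((\<lambda>e. c e $ Suc n) has_vector_derivative d $ Suc n) (at 0)"
      using hc unfolding hasD_def by blast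
    from hvd_quot[OF this] show ?thesis
      using bpe unfolding \<tau>e_def by (simp add: D_def bp0 C_def)
  qed
  have R1_0: "R1 $ 0 = 0" by (rule hasD_const_coeff[OF hR RRe0])
  have R1_1: "R1 $ 1 = 0" by (rule hasD_const_coeff[OF hR RRe1])
  have C0: "C $ 0 = 0" by (simp add: C_def c_def)
  have RC0: "(R1 oo C) $ 0 = 0" by (simp add: R1_0)
  have RC1: "(R1 oo C) $ 1 = 0"
  proof -
    have "(R1 oo C) $ 1 = R1 $ 0 * (C ^ 0) $ 1 + R1 $ 1 * (C ^ 1) $ 1"
      unfolding fps_compose_nth by (simp add: numeral_2_eq_2)
    also have "\<dots> = 0" by (simp only: R1_0 R1_1 mult_zero_left add_0)
    finally show ?thesis .
  qed
  have d0: "d $ 0 = 0" by (simp add: d_def R1_0)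
  have d1: "d $ 1 = 0" by (simp add: d_def fps_mult_nth R1_0 RC1[unfolded One_nat_def])
  have cD: "cauchy D = d" unfolding D_def by (rule cauchy_eq[OF d0])
  have D0: "D 0 = 0" using d1 by (simp add: D_def)
  have RRz: "RR \<mu> \<tau> = RRe 0" by (simp add: RRe_eq \<tau>e0)
  have Cinv: "C = fps_inv (RR \<mu> \<tau>)" by (simp add: C_def c_def RRz)
  have f_eq: "Finv \<tau> (boxplus \<mu> \<tau>) = r0 oo C"
    by (simp add: Finv_def boxplus_bp[of \<mu> \<tau>, OF \<mu>0 \<tau>0] cauchy_bp Cinv r0_def)
  define f where "f = r0 oo C"
  have "GF \<nu> \<tau> (boxplus \<mu> \<tau>) = fps_to_fls (cauchy \<nu> oo f) *
     (fls_X ^ 2 * fps_to_fls (fps_deriv f) / (fps_to_fls f) ^ 2)"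
    unfolding GF_alt f_eq f_def ..
  also have "\<dots> = fps_to_fls d"
  proof -
    define Vc where "Vc = v oo C"
    define Uc where "Uc = u 0 oo C"
    define U1c where "U1c = u1 oo C"
    define Wc where "Wc = W 0 oo C"
    define Kc where "Kc = cauchy \<nu> oo f"
    define Qc where "Qc = fps_deriv r0 oo C"
    define Cd where "Cd = fps_deriv C"
    define Fd where "Fd = fps_deriv f"
    note md = fps_compose_mult_distrib[OF C0]
    have r00: "r0 $ 0 = 0" by (simp add: r0_def)
    have u0: "u 0 = uu \<tau>" by (simp add: u_uu \<tau>e0)
    have RRX: "RRe 0 oo C = fps_X"
      unfolding C_def c_def by (rule fps_inv_right) (simp_all add: RRe0 RRe1[unfolded One_nat_def])
    have E1: "C * (Vc * Uc * Wc) = fps_X"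
      using RRX unfolding RRe_def Vc_def Uc_def Wc_def by (simp add: md C0)
    have E2: "f = C * Uc"
      unfolding f_def r0_def recipK_X Uc_def u0[symmetric] by (simp add: md C0)
    have r1X: "r1 = fps_X * u1" unfolding u1_def by (rule X_shift[OF r1_0, symmetric])
    have "r1 oo C = C * U1c" unfolding U1c_def by (subst r1X) (simp add: md C0)
    moreover have "r1 oo C = - (Kc * Qc)"
      unfolding r1_def Kc_def Qc_def f_def
      by (simp add: md fps_compose_uminus fps_compose_assoc[OF C0 r00])
    ultimately have E3: "C * U1c = - (Kc * Qc)" by simp
    have E4: "Fd = Qc * Cd" unfolding Fd_def Qc_def Cd_def f_def by (rule fps_compose_deriv[OF C0])
    have "W 0 * den 0 = 1" unfolding W_def by (rule inverse_mult_eq_1) (simp add: den0)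
    then have "(W 0 * den 0) oo C = 1" by simp
    then have E6: "Wc * (Vc + Uc - Vc * Uc) = 1"
      unfolding Wc_def Vc_def Uc_def den_def by (simp add: md fps_compose_add_distrib fps_compose_sub_distrib)
    have Ed: "d = - (C * ((Vc * Uc) * (- ((U1c - Vc * U1c) * Wc ^ 2)) + (Vc * U1c) * Wc)) * Cd"
      unfolding d_def R1_def W1_def den1_def Vc_def Uc_def U1c_def Wc_def Cd_def
      by (simp add: W_def md fps_compose_add_distrib fps_compose_sub_distrib fps_compose_uminus fps_compose_power[OF C0] C0)
    have "d = - (C * U1c) * Cd * Vc * Wc * (Wc * (Vc + Uc - Vc * Uc) - Uc * Wc + Vc * Uc * Wc)"
      unfolding Ed E6 by (simp add: algebra_simps power2_eq_square)
    also have "\<dots> = Kc * (Qc * Cd) * (Vc * Wc) ^ 2"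
      unfolding E3 by (simp add: algebra_simps power2_eq_square)
    finally have "d * f ^ 2 = Kc * Fd * (C * (Vc * Uc * Wc)) ^ 2"
      unfolding E4 E2 by (simp add: algebra_simps power2_eq_square)
    then have dd: "d * f ^ 2 = Kc * Fd * fps_X ^ 2" unfolding E1 .
    have f1: "f $ 1 = 1"
      unfolding f_def by (simp add: fps_compose_nth r00 r0_def recipK_nth1[of \<tau>, OF \<tau>0, unfolded One_nat_def]
          C_def c_def RRe1[unfolded One_nat_def] fps_inv_nth1[unfolded One_nat_def])
    have fnz: "fps_to_fls f \<noteq> 0" using f1 by auto
    have "fps_to_fls d * fps_to_fls f ^ 2 = fps_to_fls Kc * fps_to_fls Fd * fls_X ^ 2"
      using arg_cong[OF dd, of fps_to_fls] by (simp add: fls_times_fps_to_fls fps_to_fls_power)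
    then show ?thesis using fnz unfolding Kc_def Fd_def
      by (simp add: field_simps)
  qed
  finally show ?thesis using D0 lim cD by auto
qed



lemma pairing_le:
  assumes "degree p \<le> N"
  shows "pairing \<phi> p = (\<Sum>i\<le>N. coeff p i * \<phi> i)"
  unfolding pairing_def
  by (rule sum.mono_neutral_left) (use assms in \<open>auto simp: coeff_eq_0\<close>)

lemma pairing_zero [simp]: "pairing \<phi> 0 = 0"
  by (simp add: pairing_def)

lemma pairing_add: "pairing \<phi> (p + q) = pairing \<phi> p + pairing \<phi> q"
proof -
  define N where "N = max (degree p) (degree q)"
  have "degree (p + q) \<le> N" unfolding N_def by (rule degree_add_le) auto
  moreover have "degree p \<le> N" "degree q \<le> N" unfolding N_def by auto
  ultimately show ?thesis
    by (simp add: pairing_le[of _ N] sum.distrib distrib_right)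
qed

lemma pairing_smult: "pairing \<phi> (smult c p) = c * pairing \<phi> p"
proof -
  have "degree (smult c p) \<le> degree p" by (rule degree_smult_le)
  then show ?thesis
    by (simp add: pairing_le[of _ "degree p"] sum_distrib_left mult.assoc)
qed

lemma pairing_sum: "finite S \<Longrightarrow> pairing \<phi> (\<Sum>i\<in>S. p i) = (\<Sum>i\<in>S. pairing \<phi> (p i))"
  by (induction S rule: finite_induct) (simp_all add: pairing_add)

lemma pairing_monom: "pairing \<phi> (monom c n) = c * \<phi> n"
proof -
  have "degree (monom c n) \<le> n" by (rule degree_monom_le)
  then have "pairing \<phi> (monom c n) = (\<Sum>i\<le>n. coeff (monom c n) i * \<phi> i)"
    by (rule pairing_le)
  also have "\<dots> = (\<Sum>i\<le>n. if n = i then c * \<phi> i else 0)"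
    by (rule sum.cong) (auto simp: coeff_monom)
  also have "\<dots> = c * \<phi> n" by simp
  finally show ?thesis .
qed

lemma pairing_deriv:
  assumes "\<psi> 0 = 0" "\<And>j. \<psi> (Suc j) = of_nat (Suc j) * \<eta> j"
  shows "pairing \<psi> p = pairing \<eta> (pderiv p)"
proof -
  define N where "N = degree p"
  have "pairing \<psi> p = (\<Sum>i\<le>Suc N. coeff p i * \<psi> i)"
    by (rule pairing_le) (simp add: N_def)
  also have "\<dots> = (\<Sum>i\<le>N. coeff p (Suc i) * \<psi> (Suc i)) + coeff p 0 * \<psi> 0"
    by (rule sum.atMost_Suc_shift[THEN trans]) simp
  also have "\<dots> = (\<Sum>i\<le>N. coeff (pderiv p) i * \<eta> i)"
    by (simp add: assms coeff_pderiv mult_ac)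
  also have "\<dots> = pairing \<eta> (pderiv p)"
    by (rule pairing_le[symmetric]) (simp add: N_def degree_pderiv)
  finally show ?thesis .
qed

lemma pairing_Kop:
  assumes "\<And>j. \<eta> j = (\<Sum>n\<le>j. \<eta>0 n * (f ^ (n+1)) $ Suc j)"
  shows "pairing \<eta> q = pairing \<eta>0 (Kop f q)"
  unfolding Kop_def pairing_sum[OF finite_atMost] pairing_smult pairing_monom
  by (simp add: pairing_def assms mult_ac)

lemma pairing_diff_fun: "pairing (\<lambda>i. a i - b i) p = pairing a p - pairing b p"
  by (simp add: pairing_def sum_subtractf right_diff_distrib)

lemma dual_unique:
  fixes a b :: moments
  assumes deg: "\<And>k. k \<ge> 1 \<Longrightarrow> degree (P k) = k"
    and a0: "a 0 = 0" and b0: "b 0 = 0"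
    and eq: "\<And>k. k \<ge> 1 \<Longrightarrow> pairing a (P k) = pairing b (P k)"
  shows "a = b"
proof -
  define \<delta> where "\<delta> = (\<lambda>i. a i - b i)"
  have z: "pairing \<delta> (P k) = 0" if "k \<ge> 1" for k
    unfolding \<delta>_def pairing_diff_fun using eq[OF that] by simp
  have "\<delta> m = 0" for m
  proof (induction m rule: less_induct)
    case (less m)
    show ?case
    proof (cases m)
      case 0 then show ?thesis by (simp add: \<delta>_def a0 b0)
    next
      case (Suc j)
      have dm: "degree (P m) = m" using deg[of m] Suc by simp
      have Pnz: "P m \<noteq> 0" using dm Suc by (metis degree_0 nat.distinct(1))
      have nz: "coeff (P m) m \<noteq> 0" using Pnz dm by (metis leading_coeff_0_iff)
      have "0 = pairing \<delta> (P m)" using z[of m] Suc by simp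
      also have "\<dots> = (\<Sum>i\<le>m. coeff (P m) i * \<delta> i)" by (rule pairing_le) (simp add: dm)
      also have "\<dots> = (\<Sum>i\<le>j. coeff (P m) i * \<delta> i) + coeff (P m) m * \<delta> m"
        by (simp add: Suc)
      also have "(\<Sum>i\<le>j. coeff (P m) i * \<delta> i) = 0"
        using less Suc by (intro sum.neutral) auto
      finally show ?thesis using nz by simp
    qed
  qed
  then show ?thesis unfolding \<delta>_def by (auto simp: fun_eq_iff)
qed

lemma moment0: "is_moment_seq m \<Longrightarrow> m 0 = 1"
  unfolding is_moment_seq_def
  by (auto simp: prob_space.prob_space)

lemma fs_0: "free_semigroup mu \<Longrightarrow> 0 \<le> t \<Longrightarrow> mu t 0 = 1"
  unfolding free_semigroup_def using moment0 by blast

lemma fluct_degree: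
  assumes "fluctuation_polys mu V" "k \<ge> 1" "0 \<le> t"
  shows "degree (V k t) = k"
proof -
  have "pderiv (V k t) \<noteq> 0" "degree (pderiv (V k t)) = k - 1"
    using assms unfolding fluctuation_polys_def by auto
  then show ?thesis using assms(2) by (simp add: degree_pderiv pderiv_eq_0_iff)
qed

lemma part3:
  assumes fs: "free_semigroup mu" and fl: "fluctuation_polys mu V" and du: "dual_family V Vs"
    and n1: "n \<ge> 1" and s0: "0 \<le> s" and st: "s < t"
  shows "GF (Vs n s) (mu s) (mu t) = fps_to_fls (cauchy (Vs n t))"
proof -
  have t0: "0 \<le> t" using s0 st by simp
  define \<phi> where "\<phi> = Vs n s"
  have \<phi>0: "\<phi> 0 = 0" using du n1 s0 unfolding dual_family_def \<phi>_def by auto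
  define f where "f = Finv (mu s) (mu t)"
  have f0: "f $ 0 = 0" by (simp add: f_def Finv_def)
  have f1: "f $ 1 = 1"
    unfolding f_def Finv_def
    by (simp add: fps_compose_nth recipK_nth1[of "mu s", OF fs_0[OF fs s0], unfolded One_nat_def] fs_0[OF fs t0])
  have fnz: "fps_to_fls f \<noteq> 0" using f1 by auto
  define \<eta>0 where "\<eta>0 = (\<lambda>j. \<phi> (Suc j) / of_nat (Suc j))"
  define E where "E = cauchy \<eta>0"
  have cphi: "cauchy \<phi> = fps_X ^ 2 * fps_deriv E"
  proof (rule fps_ext)
    fix m show "cauchy \<phi> $ m = (fps_X ^ 2 * fps_deriv E) $ m"
      by (cases m; cases "m - 1") (simp_all add: fps_X_power_mult_nth E_def \<eta>0_def \<phi>0 del: of_nat_Suc)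
  qed
  define G where "G = E oo f"
  have "cauchy \<phi> oo f = f ^ 2 * (fps_deriv E oo f)"
    unfolding cphi by (simp add: fps_compose_mult_distrib[OF f0] fps_compose_power[OF f0, symmetric] f0)
  then have "GF \<phi> (mu s) (mu t) = fps_to_fls (f ^ 2 * (fps_deriv E oo f)) *
      (fls_X ^ 2 * fps_to_fls (fps_deriv f) / (fps_to_fls f) ^ 2)"
    unfolding GF_alt f_def by simp
  also have "\<dots> = fps_to_fls (fps_X ^ 2 * ((fps_deriv E oo f) * fps_deriv f))"
    using fnz by (simp add: fls_times_fps_to_fls fps_to_fls_power field_simps)
  also have "\<dots> = fps_to_fls (fps_X ^ 2 * fps_deriv G)"
    unfolding G_def fps_compose_deriv[OF f0] ..
  finally have GFe: "GF \<phi> (mu s) (mu t) = fps_to_fls (fps_X ^ 2 * fps_deriv G)" .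
  define chi where "chi = (\<lambda>j. (fps_X ^ 2 * fps_deriv G) $ Suc j)"
  have cchi: "cauchy chi = fps_X ^ 2 * fps_deriv G"
    unfolding chi_def by (rule cauchy_eq) (simp add: fps_X_power_mult_nth)
  define \<eta> where "\<eta> = (\<lambda>j. G $ Suc j)"
  have chi0: "chi 0 = 0" by (simp add: chi_def fps_X_power_mult_nth)
  have chiS: "chi (Suc j) = of_nat (Suc j) * \<eta> j" for j
    by (simp add: chi_def \<eta>_def fps_X_power_mult_nth del: of_nat_Suc)
  have \<eta>eq: "\<eta> j = (\<Sum>m\<le>j. \<eta>0 m * (f ^ (m+1)) $ Suc j)" for j
    unfolding \<eta>_def G_def fps_compose_nth sum.atLeast0_atMost_Suc_shift
    by (simp add: E_def atLeast0AtMost)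
  have \<phi>S: "\<phi> (Suc j) = of_nat (Suc j) * \<eta>0 j" for j
    by (simp add: \<eta>0_def del: of_nat_Suc)
  have pk: "pairing chi (V k t) = pairing (Vs n t) (V k t)" if k1: "k \<ge> 1" for k
  proof -
    have "pairing chi (V k t) = pairing \<eta> (pderiv (V k t))"
      by (rule pairing_deriv[OF chi0 chiS])
    also have "\<dots> = pairing \<eta>0 (Kop f (pderiv (V k t)))"
      by (rule pairing_Kop[OF \<eta>eq])
    also have "Kop f (pderiv (V k t)) = pderiv (V k s)"
      using fl k1 s0 st unfolding fluctuation_polys_def martingale_poly_def Kst_def f_def by blast
    also have "pairing \<eta>0 (pderiv (V k s)) = pairing \<phi> (V k s)"
      by (rule pairing_deriv[OF \<phi>0 \<phi>S, symmetric])
    also have "\<dots> = pairing (Vs n t) (V k t)"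
      using du n1 k1 s0 t0 unfolding dual_family_def \<phi>_def by simp
    finally show ?thesis .
  qed
  have "chi = Vs n t"
  proof (rule dual_unique[where P = "\<lambda>k. V k t"])
    show "\<And>k. 1 \<le> k \<Longrightarrow> degree (V k t) = k" using fluct_degree[OF fl _ t0] by blast
    show "chi 0 = 0" by (rule chi0)
    show "Vs n t 0 = 0" using du n1 t0 unfolding dual_family_def by auto
    show "\<And>k. 1 \<le> k \<Longrightarrow> pairing chi (V k t) = pairing (Vs n t) (V k t)" by (rule pk)
  qed
  then show ?thesis using GFe cchi unfolding \<phi>_def by simp
qed



lemma part2_box:
  assumes fs: "free_semigroup mu" and s0: "0 \<le> s" and t0: "0 \<le> t"
  shows "boxplus (mu t) (mu s) = mu (s + t)"
proof (rule boxplus_eq)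
  show "mu (s + t) 0 = 1" using fs_0[OF fs, of "s + t"] s0 t0 by simp
  have R: "\<And>x. 0 \<le> x \<Longrightarrow> Rtrans (mu x) = fls_const (complex_of_real x) * Rtrans (mu 1)"
    using fs unfolding free_semigroup_def by blast
  have "Rtrans (mu t) + Rtrans (mu s) = (fls_const (complex_of_real t) + fls_const (complex_of_real s)) * Rtrans (mu 1)"
    using R[OF t0] R[OF s0] by (simp add: distrib_right)
  also have "\<dots> = fls_const (complex_of_real (s + t)) * Rtrans (mu 1)"
    by (simp add: fls_plus_const add.commute)
  also have "\<dots> = Rtrans (mu (s + t))" using R[of "s + t"] s0 t0 by simp
  finally show "Rtrans (mu (s + t)) = Rtrans (mu t) + Rtrans (mu s)" by simp
qed

lemma quot_aux:
  fixes f :: "real \<Rightarrow> complex"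
  assumes "((\<lambda>e. f e / complex_of_real e) \<longlongrightarrow> L) (at 0)"
  shows "((\<lambda>e. (f e - complex_of_real e * L) / complex_of_real e) \<longlongrightarrow> 0) (at 0)"
proof -
  have L: "((\<lambda>e. f e / complex_of_real e - L) \<longlongrightarrow> 0) (at 0)"
    using assms by (rule LIM_zero)
  have ev: "eventually (\<lambda>e. f e / complex_of_real e - L = (f e - complex_of_real e * L) / complex_of_real e) (at (0::real))"
    unfolding eventually_at_filter
  proof (intro always_eventually allI impI)
    fix e :: real assume "e \<noteq> 0"
    then show "f e / complex_of_real e - L = (f e - complex_of_real e * L) / complex_of_real e"
      by (simp add: diff_divide_distrib)
  qed
  show ?thesis by (rule tendsto_cong[OF ev, THEN iffD1, OF L])
qed

lemma part2_lim:
  assumes fs: "free_semigroup mu" and s0: "0 \<le> s" and t0: "0 \<le> t" and \<nu>0: "\<nu> 0 = 0"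
  shows "((\<lambda>\<epsilon>::real.
             (fls_nth (fps_to_fls (cauchy (boxplus (mu t) (\<lambda>j. mu s j + complex_of_real \<epsilon> * \<nu> j)))) k
              - fls_nth (fps_to_fls (cauchy (mu (s + t)))) k
              - complex_of_real \<epsilon> * fls_nth (GF \<nu> (mu s) (mu (s + t))) k) / complex_of_real \<epsilon>)
             \<longlongrightarrow> 0) (at 0)"
proof -
  have mt: "mu t 0 = 1" by (rule fs_0[OF fs t0])
  have ms: "mu s 0 = 1" by (rule fs_0[OF fs s0])
  obtain D where D0: "D 0 = 0"
    and lim: "\<And>n. ((\<lambda>\<epsilon>::real. (boxplus (mu t) (\<lambda>k. mu s k + complex_of_real \<epsilon> * \<nu> k) n
                               - boxplus (mu t) (mu s) n) / complex_of_real \<epsilon>) \<longlongrightarrow> D n) (at 0)"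
    and gf: "fps_to_fls (cauchy D) = GF \<nu> (mu s) (boxplus (mu t) (mu s))"
    using part1[of "mu t" "mu s" \<nu>, OF mt ms \<nu>0] by blast
  have bx: "boxplus (mu t) (mu s) = mu (s + t)" by (rule part2_box[OF fs s0 t0])
  note gf' = gf[unfolded bx, symmetric]
  show ?thesis
  proof (cases "k < 0")
    case True
    then show ?thesis by (simp add: gf')
  next
    case False
    then obtain m where km: "k = int m" by (metis nonneg_int_cases not_less)
    show ?thesis
    proof (cases m)
      case 0
      then show ?thesis by (simp add: km gf')
    next
      case (Suc n)
      have "((\<lambda>\<epsilon>::real. (boxplus (mu t) (\<lambda>k. mu s k + complex_of_real \<epsilon> * \<nu> k) n
                               - mu (s + t) n - complex_of_real \<epsilon> * D n) / complex_of_real \<epsilon>) \<longlongrightarrow> 0) (at 0)"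
        using quot_aux[OF lim[of n, unfolded bx]] by (simp add: algebra_simps)
      then show ?thesis by (simp add: km Suc gf' del: of_nat_Suc)
    qed
  qed
qed

theorem lemma4p12:
  shows
  "(\<forall>\<mu> \<tau> \<nu>. \<mu> 0 = 1 \<and> \<tau> 0 = 1 \<and> \<nu> 0 = 0 \<longrightarrow>
      (\<exists>D. D 0 = 0 \<and>
         (\<forall>n. ((\<lambda>\<epsilon>::real. (boxplus \<mu> (\<lambda>k. \<tau> k + complex_of_real \<epsilon> * \<nu> k) n
                               - boxplus \<mu> \<tau> n) / complex_of_real \<epsilon>) \<longlongrightarrow> D n) (at 0)) \<and>
         fps_to_fls (cauchy D) = GF \<nu> \<tau> (boxplus \<mu> \<tau>)))
   \<and>
   (\<forall>mu. free_semigroup mu \<longrightarrow>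
      (\<forall>s t \<nu>. 0 \<le> s \<and> 0 \<le> t \<and> \<nu> 0 = 0 \<longrightarrow>
         boxplus (mu t) (mu s) = mu (s + t) \<and>
         (\<forall>k::int. ((\<lambda>\<epsilon>::real.
             (fls_nth (fps_to_fls (cauchy (boxplus (mu t) (\<lambda>j. mu s j + complex_of_real \<epsilon> * \<nu> j)))) k
              - fls_nth (fps_to_fls (cauchy (mu (s + t)))) k
              - complex_of_real \<epsilon> * fls_nth (GF \<nu> (mu s) (mu (s + t))) k) / complex_of_real \<epsilon>)
             \<longlongrightarrow> 0) (at 0)))
      \<and>
      (\<forall>V Vs. fluctuation_polys mu V \<and> dual_family V Vs \<longrightarrow>
         (\<forall>n\<ge>1. \<forall>s t. 0 \<le> s \<and> s < t \<longrightarrow>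
            GF (Vs n s) (mu s) (mu t) = fps_to_fls (cauchy (Vs n t)))))"
proof (intro conjI allI impI)
  fix \<mu> \<tau> \<nu> :: moments
  assume "\<mu> 0 = 1 \<and> \<tau> 0 = 1 \<and> \<nu> 0 = 0"
  then show "\<exists>D. D 0 = 0 \<and>
         (\<forall>n. ((\<lambda>\<epsilon>::real. (boxplus \<mu> (\<lambda>k. \<tau> k + complex_of_real \<epsilon> * \<nu> k) n
                               - boxplus \<mu> \<tau> n) / complex_of_real \<epsilon>) \<longlongrightarrow> D n) (at 0)) \<and>
         fps_to_fls (cauchy D) = GF \<nu> \<tau> (boxplus \<mu> \<tau>)"
    using part1 by blast
next
  fix mu :: "real \<Rightarrow> moments" and s t :: real and \<nu> :: moments
  assume "free_semigroup mu" "0 \<le> s \<and> 0 \<le> t \<and> \<nu> 0 = 0"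
  then show "boxplus (mu t) (mu s) = mu (s + t)" using part2_box by blast
next
  fix mu :: "real \<Rightarrow> moments" and s t :: real and \<nu> :: moments and k :: int
  assume "free_semigroup mu" "0 \<le> s \<and> 0 \<le> t \<and> \<nu> 0 = 0"
  then show "((\<lambda>\<epsilon>::real.
             (fls_nth (fps_to_fls (cauchy (boxplus (mu t) (\<lambda>j. mu s j + complex_of_real \<epsilon> * \<nu> j)))) k
              - fls_nth (fps_to_fls (cauchy (mu (s + t)))) k
              - complex_of_real \<epsilon> * fls_nth (GF \<nu> (mu s) (mu (s + t))) k) / complex_of_real \<epsilon>)
             \<longlongrightarrow> 0) (at 0)"
    using part2_lim by blast
next
  fix mu :: "real \<Rightarrow> moments" and V Vs and n :: nat and s t :: real
  assume "free_semigroup mu" "fluctuation_polys mu V \<and> dual_family V Vs" "1 \<le> n" "0 \<le> s \<and> s < t"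
  then show "GF (Vs n s) (mu s) (mu t) = fps_to_fls (cauchy (Vs n t))"
    using part3 by blast
qed

end
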